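(* Let $F$ be a field, $t\ge 1$, and let $e_1,\dots,e_t\in M_n(F)$ be nonzero pairwise orthogonal idempotents ($e_ie_j=0$ for $i\ne j$, $e_i^2=e_i$) with $e_1+\cdots+e_t=I_n$; let $n_i=\mathrm{rank}(e_i)$. Let $\sigma_1,\dots,\sigma_t\in F$ be such that $\sum_{i=1}^t\sigma_ik_i\ne 0$ in $F$ for every integer $t$-tuple $(k_1,\dots,k_t)\ne\vec 0$ with $0\le k_i\le n_i$ for all $i$. Then $$V=\Big\{a\in M_n(F):\ e_iae_j=0 \text{ for all } 1\le i<j\le t,\ \ \sum_{i=1}^t\sigma_i\,\mathrm{Tr}(e_iae_i)=0\Big\}$$ (the matrices which are block lower triangular with respect to $e_1,\dots,e_t$ and whose diagonal blocks $a_{ii}=e_iae_i$ satisfy $\sum_i\sigma_i\mathrm{Tr}(a_{ii})=0$) is a Mathieu subspace of $M_n(F)$.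
   Context: Let $\mathcal A$ be an associative algebra over a field $F$. An $F$-subspace $M\subseteq\mathcal A$ is a Mathieu subspace (MS) of $\mathcal A$ if for all $a,b,c\in\mathcal A$ such that $a^m\in M$ for all $m\ge 1$, there exists $N$ (depending on $a,b,c$) such that $ba^mc\in M$ for all $m\ge N$. *)

theory Defs
  imports "HOL-Analysis.Analysis"
begin

primrec matpow :: "'a::semiring_1^'n^'n \<Rightarrow> nat \<Rightarrow> 'a^'n^'n" where
  "matpow A 0 = mat 1"
| "matpow A (Suc m) = A ** matpow A m"

definition msmult :: "'a::field \<Rightarrow> 'a^'n^'n \<Rightarrow> 'a^'n^'n" where
  "msmult c A = (\<chi> i j. c * A $ i $ j)"

definition F_subspace :: "('a::field^'n^'n) set \<Rightarrow> bool" where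
  "F_subspace M \<longleftrightarrow> 0 \<in> M \<and> (\<forall>x\<in>M. \<forall>y\<in>M. x + y \<in> M) \<and> (\<forall>c. \<forall>x\<in>M. msmult c x \<in> M)"

definition mathieu_subspace :: "('a::field^'n^'n) set \<Rightarrow> bool" where
  "mathieu_subspace M \<longleftrightarrow> F_subspace M \<and>
     (\<forall>a b c. (\<forall>m\<ge>1. matpow a m \<in> M) \<longrightarrow> (\<exists>N. \<forall>m\<ge>N. b ** matpow a m ** c \<in> M))"

end

theory Submission
  imports Defs
begin



lemma mat_add: "mat (a + b) = (mat a + mat b :: 'a::semiring_1^'n^'n)"
  by (simp add: mat_def vec_eq_iff)

lemma mat_mult_comp: "(mat c ** X) $ i $ j = c * (X $ i $ j :: 'a::semiring_1)"
proof -
  have "(mat c ** X) $ i $ j = (\<Sum>k\<in>UNIV. (if i = k then c else 0) * X $ k $ j)"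
    by (simp add: matrix_matrix_mult_def mat_def)
  also have "\<dots> = (\<Sum>k\<in>UNIV. (if i = k then c * X $ k $ j else 0))"
    by (rule sum.cong) auto
  also have "\<dots> = c * X $ i $ j" by simp
  finally show ?thesis .
qed

lemma matrix_add_rdistrib: "((A + B) ** C) = (A ** C) + (B ** C :: 'a::semiring_1^_^_)"
  by (vector matrix_matrix_mult_def sum.distrib[symmetric] field_simps)

lemma matrix_scalar_comm: "X ** (mat c ** Y) = mat c ** (X ** Y :: 'a::comm_semiring_1^_^_)"
proof -
  have "(X ** (mat c ** Y)) $ i $ j = (mat c ** (X ** Y)) $ i $ j" for i j
  proof -
    have "(X ** (mat c ** Y)) $ i $ j = (\<Sum>k\<in>UNIV. X $ i $ k * (mat c ** Y) $ k $ j)"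
      by (simp add: matrix_matrix_mult_def)
    also have "\<dots> = c * (\<Sum>k\<in>UNIV. X $ i $ k * Y $ k $ j)"
      by (simp add: mat_mult_comp sum_distrib_left mult_ac)
    also have "\<dots> = (mat c ** (X ** Y)) $ i $ j"
      by (subst mat_mult_comp) (simp add: matrix_matrix_mult_def)
    finally show ?thesis .
  qed
  then show ?thesis by (simp add: vec_eq_iff)
qed

lemma mat_mult_mat: "mat a ** mat b = (mat (a * b) :: 'a::semiring_1^'n^'n)"
  by (simp add: vec_eq_iff mat_mult_comp) (simp add: mat_def)

lemma matrix_sum_ldistrib: "A ** sum f S = (\<Sum>k\<in>S. A ** f k :: 'a::semiring_1^_^_)"
  by (induction S rule: infinite_finite_induct) (auto simp: matrix_add_ldistrib)

lemma matrix_sum_rdistrib: "sum f S ** A = (\<Sum>k\<in>S. f k ** A :: 'a::semiring_1^_^_)"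
  by (induction S rule: infinite_finite_induct) (auto simp: matrix_add_rdistrib)

lemma trace_mat_mult: "trace (mat c ** A) = c * trace (A :: 'a::comm_semiring_1^'n^'n)"
  by (simp add: trace_def mat_mult_comp sum_distrib_left)

lemma trace_sum: "trace (sum f S) = (\<Sum>k\<in>S. trace (f k :: 'a::comm_semiring_1^'n^'n))"
  by (induction S rule: infinite_finite_induct) (auto simp: trace_add trace_def sum.distrib)

lemma trace_zero [simp]: "trace (0 :: 'a::comm_semiring_1^'n^'n) = 0"
  by (simp add: trace_def)

lemma matpow_Suc_right: "matpow A (Suc m) = matpow A m ** A"
  by (induction m) (simp_all add: matrix_mul_assoc)

lemma matpow_add: "matpow A (m + k) = matpow A m ** matpow A k"
  by (induction m) (simp_all add: matrix_mul_assoc)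

lemma matpow_1 [simp]: "matpow A 1 = A"
  by simp

definition mpe :: "'a::field poly \<Rightarrow> 'a^'n^'n \<Rightarrow> 'a^'n^'n" where
  "mpe p A = (\<Sum>k\<le>degree p. mat (coeff p k) ** matpow A k)"

lemma mpe_le:
  assumes "degree p \<le> N"
  shows "mpe p A = (\<Sum>k\<le>N. mat (coeff p k) ** matpow A k)"
  unfolding mpe_def
  by (rule sum.mono_neutral_left) (use assms in \<open>auto simp: coeff_eq_0\<close>)

lemma mpe_0 [simp]: "mpe 0 A = 0"
  by (simp add: mpe_def)

lemma mpe_add: "mpe (p + q) A = mpe p A + mpe q A"
proof -
  let ?N = "max (degree p) (degree q)"
  have "mpe (p + q) A = (\<Sum>k\<le>?N. mat (coeff (p+q) k) ** matpow A k)"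
    by (rule mpe_le) (simp add: degree_add_le)
  also have "\<dots> = (\<Sum>k\<le>?N. mat (coeff p k) ** matpow A k) + (\<Sum>k\<le>?N. mat (coeff q k) ** matpow A k)"
    by (simp add: mat_add matrix_add_rdistrib sum.distrib)
  also have "\<dots> = mpe p A + mpe q A"
    by (simp add: mpe_le[of p ?N] mpe_le[of q ?N])
  finally show ?thesis .
qed

lemma mpe_smult: "mpe (smult c p) A = mat c ** mpe p A"
proof -
  have "mpe (smult c p) A = (\<Sum>k\<le>degree p. mat (coeff (smult c p) k) ** matpow A k)"
    by (rule mpe_le) simp
  also have "\<dots> = mat c ** mpe p A"
    by (simp add: mpe_def matrix_sum_ldistrib matrix_mul_assoc mat_mult_mat)
  finally show ?thesis .
qed

lemma mpe_minus: "mpe (- p) A = - mpe p A"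
proof -
  have "mpe (- p) A + mpe p A = 0" by (simp flip: mpe_add)
  then show ?thesis by (simp add: eq_neg_iff_add_eq_0)
qed

lemma mpe_diff: "mpe (p - q) A = mpe p A - mpe q A"
  using mpe_add[of p "-q" A] by (simp add: mpe_minus)

lemma mpe_pCons: "mpe (pCons c p) A = mat c + A ** mpe p A"
proof -
  have "mpe (pCons c p) A = (\<Sum>k\<le>Suc (degree p). mat (coeff (pCons c p) k) ** matpow A k)"
    by (rule mpe_le) (simp add: degree_pCons_le)
  also have "\<dots> = mat c + (\<Sum>k\<le>degree p. mat (coeff p k) ** (A ** matpow A k))"
    by (subst sum.atMost_Suc_shift) simp
  also have "\<dots> = mat c + A ** mpe p A"
    by (simp add: mpe_def matrix_sum_ldistrib matrix_scalar_comm)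
  finally show ?thesis .
qed

lemma mpe_mult: "mpe (p * q) A = mpe p A ** mpe q A"
  by (induction p rule: pCons_induct)
    (simp_all add: mult_pCons_left mpe_add mpe_smult mpe_pCons matrix_add_rdistrib matrix_mul_assoc)

lemma mpe_comm: "mpe p A ** mpe q A = mpe q A ** mpe p A"
  by (metis mpe_mult mult.commute)

lemma mpe_monom: "mpe (monom c k) A = mat c ** matpow A k"
proof -
  have "mpe (monom c k) A = (\<Sum>j\<le>k. mat (coeff (monom c k) j) ** matpow A j)"
    by (rule mpe_le) (simp add: degree_monom_le)
  also have "\<dots> = mat c ** matpow A k"
  proof -
    have "\<And>j. mat (coeff (monom c k) j) ** matpow A j = (if k = j then mat c ** matpow A j else 0)"
      by (simp add: coeff_monom)
    then show ?thesis by simp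
  qed
  finally show ?thesis .
qed

lemma mpe_x [simp]: "mpe [:0,1:] A = A"
  by (simp add: mpe_pCons)

lemma mpe_one [simp]: "mpe 1 A = mat 1"
  by (simp add: one_pCons mpe_pCons)

lemma mpe_xpow: "mpe ([:0,1:] ^ r) A = matpow A r"
  by (induction r) (simp_all add: mpe_mult mpe_pCons)

lemma mpe_sum: "mpe (sum f S) A = (\<Sum>k\<in>S. mpe (f k) A)"
  by (induction S rule: infinite_finite_induct) (auto simp: mpe_add)



lemma annih:
  fixes A :: "'a::field^'n^'n"
  shows "\<exists>P. P \<noteq> 0 \<and> mpe P A = 0"
proof -
  define fl :: "'a^'n^'n \<Rightarrow> 'a^('n\<times>'n)" where "fl M = (\<chi> p. M $ fst p $ snd p)" for M
  have fl_inj: "M = M'" if "fl M = fl M'" for M M'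
  proof -
    have "\<forall>p. M $ fst p $ snd p = M' $ fst p $ snd p" using that by (simp add: fl_def vec_eq_iff)
    then show ?thesis by (simp add: vec_eq_iff)
  qed
  define N where "N = CARD('n \<times> 'n)"
  define w where "w k = fl (matpow A k)" for k
  show ?thesis
  proof (cases "inj_on w {..N}")
    case False
    then obtain k l where kl: "k \<le> N" "l \<le> N" "k \<noteq> l" "w k = w l" by (auto simp: inj_on_def)
    then have eq: "matpow A k = matpow A l" using fl_inj w_def by auto
    let ?P = "monom 1 k - monom (1::'a) l"
    have "coeff ?P k = 1" using \<open>k\<noteq>l\<close> by (simp add: coeff_monom)
    hence "?P \<noteq> 0" by (metis coeff_0 zero_neq_one)
    moreover have "mpe ?P A = 0" by (simp add: mpe_diff mpe_monom eq)
    ultimately show ?thesis by blast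
  next
    case True
    let ?S = "w ` {..N}"
    have cardS: "card ?S = N + 1" using True by (simp add: card_image)
    have "vec.dependent ?S"
    proof (rule ccontr)
      assume ind: "\<not> vec.dependent ?S"
      have "card ?S \<le> vec.dim ?S" using vec.independent_bound_general[OF ind] by simp
      also have "\<dots> \<le> vec.dim (UNIV :: ('a^('n\<times>'n)) set)" by (rule vec.dim_subset) simp
      also have "\<dots> = N" unfolding N_def by (rule vec_dim_card)
      finally show False using cardS by simp
    qed
    then obtain u where u: "\<exists>v\<in>?S. u v \<noteq> 0" "(\<Sum>v\<in>?S. u v *s v) = 0"
      using vec.dependent_finite[of ?S] by auto
    obtain k0 where k0: "k0 \<le> N" "u (w k0) \<noteq> 0" using u(1) by auto
    have sum0: "(\<Sum>k\<le>N. u (w k) *s w k) = 0"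
      using u(2) by (simp add: sum.reindex[OF True])
    define P where "P = (\<Sum>k\<le>N. monom (u (w k)) k)"
    have "coeff P k0 = u (w k0)" using k0(1) by (simp add: P_def coeff_sum coeff_monom)
    hence "P \<noteq> 0" using k0 by auto
    moreover have "mpe P A = 0"
    proof -
      have "mpe P A = (\<Sum>k\<le>N. mat (u (w k)) ** matpow A k)" by (simp add: P_def mpe_sum mpe_monom)
      moreover have "(\<Sum>k\<le>N. mat (u (w k)) ** matpow A k) $ i $ j = 0" for i j
      proof -
        have "(\<Sum>k\<le>N. u (w k) *s w k) $ (i,j) = 0" using sum0 by simp
        then show ?thesis by (simp add: sum_component mat_mult_comp w_def fl_def)
      qed
      ultimately show ?thesis by (simp add: vec_eq_iff)
    qed
    ultimately show ?thesis by blast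
  qed
qed

lemma bez:
  fixes P :: "'a::field poly"
  assumes "P \<noteq> 0"
  obtains r u v Q where "r \<ge> 1" "[:0,1:]^r * Q = [:0,1:] * P" "u * [:0,1:]^r + v * Q = 1"
proof -
  obtain Q where PQ: "P = [:-0,1:]^order 0 P * Q" and nd: "\<not> [:-0,1:] dvd Q"
    using order_decomp[OF assms] by blast
  have c0: "coeff Q 0 \<noteq> 0" using nd poly_eq_0_iff_dvd[of Q 0] by (simp add: poly_0_coeff_0)
  define r where "r = Suc (order 0 P)"
  have r1: "r \<ge> 1" by (simp add: r_def)
  have rQ: "[:0,1:]^r * Q = [:0,1:] * P" using PQ by (simp add: r_def mult.assoc)
  obtain c W where QcW: "Q = pCons c W" by (cases Q) auto
  have c: "c \<noteq> 0" using c0 QcW by simp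
  define z where "z = [:0,1:] * smult (-1/c) W"
  have Qz: "Q = smult c (1 - z)"
    using c by (simp add: QcW z_def algebra_simps one_pCons smult_add_right)
  define u where "u = (smult (-1/c) W)^r"
  define v where "v = smult (1/c) (\<Sum>i<r. z^i)"
  have zr: "z^r = [:0,1:]^r * (smult (-1/c) W)^r" by (simp only: z_def power_mult_distrib)
  have "u * [:0,1:]^r = z^r" by (simp only: u_def zr mult.commute)
  moreover have "v * Q = 1 - z^r"
    using c by (simp add: v_def Qz one_diff_power_eq mult.commute)
  ultimately have "u * [:0,1:]^r + v * Q = 1" by simp
  with r1 rQ that show ?thesis by blast
qed

lemma ring_id1:
  fixes X Q x P u v :: "'b::comm_ring_1"
  assumes "X * Q = x * P" "u * X + v * Q = 1"
  shows "(u * X) * (u * X) = u * X - (u * v * x) * P"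
proof -
  have h: "u * X = 1 - v * Q" using assms(2) by (simp add: eq_diff_eq)
  have "(u * X) * (u * X) = (u * X) * (1 - v * Q)" by (simp add: h)
  also have "\<dots> = u * X - u * v * (X * Q)" by (simp add: algebra_simps)
  also have "\<dots> = u * X - u * v * (x * P)" by (simp only: assms(1))
  finally show ?thesis by (simp add: ac_simps)
qed

lemma ring_id2:
  fixes X Q x P u v :: "'b::comm_ring_1"
  assumes "X * Q = x * P" "u * X + v * Q = 1"
  shows "X = (u * X) * X + (v * x) * P"
proof -
  have "X = X * (u * X + v * Q)" using assms(2) by simp
  also have "\<dots> = (u * X) * X + v * (X * Q)" by (simp add: algebra_simps)
  also have "\<dots> = (u * X) * X + v * (x * P)" by (simp only: assms(1))
  finally show ?thesis by (simp add: ac_simps)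
qed

lemma fitting:
  fixes A :: "'a::field^'n^'n"
  assumes P: "mpe P A = 0" and rQ: "[:0,1:]^r * Q = [:0,1:] * P" and B: "u * [:0,1:]^r + v * Q = 1"
  shows "mpe (u * [:0,1:]^r) A ** mpe (u * [:0,1:]^r) A = mpe (u * [:0,1:]^r) A"
    and "mpe (u * [:0,1:]^r) A = 0 \<Longrightarrow> matpow A r = 0"
proof -
  let ?h = "u * [:0,1:]^r"
  have eq: "?h * ?h = ?h - (u * v * [:0,1:]) * P" by (rule ring_id1[OF rQ B])
  have "mpe (?h * ?h) A = mpe (?h - (u * v * [:0,1:]) * P) A" by (rule arg_cong[OF eq])
  also have "\<dots> = mpe ?h A - mpe (u * v * [:0,1:]) A ** mpe P A"
    by (simp only: mpe_diff mpe_mult)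
  finally have "mpe (?h * ?h) A = mpe ?h A - mpe (u * v * [:0,1:]) A ** mpe P A" .
  then show "mpe ?h A ** mpe ?h A = mpe ?h A" using P by (simp add: mpe_mult)
  have "[:0,1:]^r = ?h * [:0,1:]^r + (v * [:0,1:]) * P" by (rule ring_id2[OF rQ B])
  then have "mpe ([:0,1:]^r) A = mpe ?h A ** mpe ([:0,1:]^r) A + mpe (v * [:0,1:]) A ** mpe P A"
    by (metis mpe_add mpe_mult)
  then show "mpe ?h A = 0 \<Longrightarrow> matpow A r = 0" using P by (simp add: mpe_xpow)
qed



lemma trace_transpose: "trace (transpose A) = trace (A :: 'a::semiring_1^'n^'n)"
  by (simp add: trace_def transpose_def)

lemma col_mult: "column i (G ** H) = G *v column i H"
  by (simp add: vec_eq_iff column_def matrix_matrix_mult_def matrix_vector_mult_def)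

lemma axis_col: "G *v axis j 1 = column j (G :: 'a::semiring_1^'n^'m)"
proof -
  have "(G *v axis j 1) $ i = G $ i $ j" for i
  proof -
    have "(G *v axis j 1) $ i = (\<Sum>k\<in>UNIV. if k = j then G $ i $ k else 0)"
      unfolding matrix_vector_mult_def axis_def by (simp add: if_distrib cong: if_cong)
    then show ?thesis by simp
  qed
  then show ?thesis by (simp add: vec_eq_iff column_def)
qed

lemma trace_idem_cols:
  fixes G :: "'a::field^'n^'n"
  assumes GG: "G ** G = G"
  shows "trace G = of_nat (vec.dim (columns G))"
proof -
  let ?R = "vec.span (columns G)"
  obtain Bs where Bs: "Bs \<subseteq> ?R" "vec.independent Bs" "?R \<subseteq> vec.span Bs" "card Bs = vec.dim ?R"
    using vec.basis_exists by blast
  have fin: "finite Bs" using Bs(2) vec.finiteI_independent by blast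
  have spanB: "vec.span Bs = ?R"
    using Bs(1,3) by (metis subset_antisym vec.span_mono vec.span_span)
  have inR: "G *v x \<in> ?R" for x
  proof -
    have "G *v x = (\<Sum>i\<in>UNIV. x$i *s column i G)" by (rule matrix_mult_sum)
    also have "\<dots> \<in> ?R" by (intro vec.span_sum vec.span_scale vec.span_base) (auto simp: columns_def)
    finally show ?thesis .
  qed
  have colfix: "G *v column i G = column i G" for i using GG col_mult by metis
  have fixR: "G *v v = v" if "v \<in> ?R" for v
    using vec.linear_eq_on_span[OF matrix_vector_mul_linear_gen[of G] vec.linear_id, of "columns G" v] that colfix
    by (auto simp: columns_def)
  let ?rep = "vec.representation Bs"
  have expand: "G *v x = (\<Sum>b\<in>Bs. ?rep (G *v x) b *s b)" for x
    using vec.sum_representation_eq[OF Bs(2) _ fin order_refl] inR spanB by auto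
  have "trace G = (\<Sum>j\<in>UNIV. (G *v axis j 1) $ j)" by (simp add: trace_def axis_col column_def)
  also have "\<dots> = (\<Sum>j\<in>UNIV. \<Sum>b\<in>Bs. ?rep (G *v axis j 1) b * b $ j)"
  proof (rule sum.cong[OF refl])
    fix j
    show "(G *v axis j 1) $ j = (\<Sum>b\<in>Bs. ?rep (G *v axis j 1) b * b $ j)"
      by (subst expand) (simp add: sum_component)
  qed
  also have "\<dots> = (\<Sum>b\<in>Bs. \<Sum>j\<in>UNIV. b $ j * ?rep (G *v axis j 1) b)"
    by (subst sum.swap) (simp add: mult.commute)
  also have "\<dots> = (\<Sum>b\<in>Bs. 1)"
  proof (rule sum.cong[OF refl])
    fix b assume b: "b \<in> Bs"
    have bR: "b \<in> ?R" using Bs(1) b by auto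
    have inS: "b $ j *s (G *v axis j 1) \<in> vec.span Bs" for j
      using inR spanB by (simp add: vec.span_scale)
    have "?rep (\<Sum>j\<in>UNIV. b $ j *s (G *v axis j 1)) = (\<lambda>c. \<Sum>j\<in>UNIV. ?rep (b $ j *s (G *v axis j 1)) c)"
      by (rule vec.representation_sum[OF Bs(2)]) (use inS in auto)
    also have "\<dots> = (\<lambda>c. \<Sum>j\<in>UNIV. b $ j * ?rep (G *v axis j 1) c)"
      using vec.representation_scale[OF Bs(2)] inR spanB by simp
    finally have eq1: "(\<Sum>j\<in>UNIV. b $ j * ?rep (G *v axis j 1) b) = ?rep (\<Sum>j\<in>UNIV. b $ j *s (G *v axis j 1)) b"
      by simp
    have "(\<Sum>j\<in>UNIV. b $ j *s (G *v axis j 1)) = G *v b" by (simp only: axis_col matrix_mult_sum[of G b])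
    also have "\<dots> = b" by (rule fixR[OF bR])
    finally show "(\<Sum>j\<in>UNIV. b $ j * ?rep (G *v axis j 1) b) = 1"
      using eq1 by (simp add: vec.representation_basis[OF Bs(2) b])
  qed
  also have "\<dots> = of_nat (card Bs)" by simp
  also have "card Bs = vec.dim (columns G)" using Bs(4) by simp
  finally show ?thesis .
qed

lemma trace_idem:
  fixes E :: "'a::field^'n^'n"
  assumes "E ** E = E"
  shows "trace E = of_nat (rank E)"
proof -
  have "transpose E ** transpose E = transpose E"
    using assms by (metis matrix_transpose_mul)
  then have "trace (transpose E) = of_nat (vec.dim (columns (transpose E)))" by (rule trace_idem_cols)
  then show ?thesis by (simp add: trace_transpose row_rank_def_gen)
qed

lemma rank_mult_right_le:
  fixes X e :: "'a::field^'n^'n"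
  shows "rank (X ** e) \<le> rank e"
proof -
  have "rows (X ** e) \<subseteq> vec.span (rows e)"
  proof
    fix r assume "r \<in> rows (X ** e)"
    then obtain i where r: "r = row i (X ** e)" by (auto simp: rows_def)
    have "row i (X ** e) = (\<Sum>k\<in>UNIV. X $ i $ k *s row k e)"
      by (simp add: vec_eq_iff sum_component row_def matrix_matrix_mult_def)
    also have "\<dots> \<in> vec.span (rows e)"
      by (intro vec.span_sum vec.span_scale vec.span_base) (auto simp: rows_def)
    finally show "r \<in> vec.span (rows e)" using r by simp
  qed
  then show ?thesis by (simp add: row_rank_def_gen vec.dim_mono)
qed

lemma rank_eq_0_gen:
  fixes E :: "'a::field^'n^'m"
  assumes "rank E = 0"
  shows "E = 0"
proof -
  have "rows E \<subseteq> {0}" using assms by (simp add: row_rank_def_gen)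
  then have "row i E = 0" for i by (auto simp: rows_def)
  then show ?thesis by (simp add: vec_eq_iff row_def)
qed



definition tri :: "(nat \<Rightarrow> 'a::field^'n^'n) \<Rightarrow> nat \<Rightarrow> 'a^'n^'n \<Rightarrow> bool" where
  "tri e t x \<longleftrightarrow> (\<forall>i\<in>{1..t}. \<forall>j\<in>{1..t}. i < j \<longrightarrow> e i ** x ** e j = 0)"

context
  fixes e :: "nat \<Rightarrow> 'a::field^'n^'n" and t :: nat
  assumes idem: "\<forall>i\<in>{1..t}. e i ** e i = e i"
    and orth: "\<forall>i\<in>{1..t}. \<forall>j\<in>{1..t}. i \<noteq> j \<longrightarrow> e i ** e j = 0"
    and sumI: "(\<Sum>i=1..t. e i) = mat 1"
begin

lemma idem_r: "k \<in> {1..t} \<Longrightarrow> Z ** e k ** e k = Z ** e k"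
  using idem by (metis matrix_mul_assoc)

lemma block_prod:
  "e i ** (x ** y) ** e j = (\<Sum>k=1..t. (e i ** x ** e k) ** (e k ** y ** e j))"
proof -
  have "x ** y = x ** (\<Sum>k=1..t. e k) ** y" by (simp only: sumI matrix_mul_rid)
  then have "e i ** (x ** y) ** e j = (\<Sum>k=1..t. e i ** (x ** e k ** y) ** e j)"
    by (simp add: matrix_sum_ldistrib matrix_sum_rdistrib)
  also have "\<dots> = (\<Sum>k=1..t. (e i ** x ** e k) ** (e k ** y ** e j))"
  proof (rule sum.cong[OF refl])
    fix k assume k: "k \<in> {1..t}"
    show "e i ** (x ** e k ** y) ** e j = (e i ** x ** e k) ** (e k ** y ** e j)"
      by (simp add: matrix_mul_assoc idem_r[OF k])
  qed
  finally show ?thesis .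
qed

lemma tri_mult: "tri e t x \<Longrightarrow> tri e t y \<Longrightarrow> tri e t (x ** y)"
  unfolding tri_def
proof (intro ballI impI)
  fix i j assume x: "\<forall>i\<in>{1..t}. \<forall>j\<in>{1..t}. i < j \<longrightarrow> e i ** x ** e j = 0"
    and y: "\<forall>i\<in>{1..t}. \<forall>j\<in>{1..t}. i < j \<longrightarrow> e i ** y ** e j = 0"
    and i: "i \<in> {1..t}" and j: "j \<in> {1..t}" and ij: "i < j"
  have "(\<Sum>k=1..t. (e i ** x ** e k) ** (e k ** y ** e j)) = 0"
  proof (rule sum.neutral, rule ballI)
    fix k assume k: "k \<in> {1..t}"
    show "(e i ** x ** e k) ** (e k ** y ** e j) = 0"
    proof (cases "i < k")
      case True then show ?thesis using x i k by simp
    next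
      case False then have "k < j" using ij by simp
      then show ?thesis using y j k by simp
    qed
  qed
  then show "e i ** (x ** y) ** e j = 0" by (simp add: block_prod)
qed

lemma diag_mult:
  assumes x: "tri e t x" and y: "tri e t y" and i: "i \<in> {1..t}"
  shows "e i ** (x ** y) ** e i = (e i ** x ** e i) ** (e i ** y ** e i)"
proof -
  let ?f = "\<lambda>k. (e i ** x ** e k) ** (e k ** y ** e i)"
  have "(\<Sum>k\<in>{1..t} - {i}. ?f k) = 0"
  proof (rule sum.neutral, rule ballI)
    fix k assume k: "k \<in> {1..t} - {i}"
    show "?f k = 0"
    proof (cases "i < k")
      case True then show ?thesis using x i k by (simp add: tri_def)
    next
      case False then have "k < i" using k by auto
      then show ?thesis using y i k by (simp add: tri_def)
    qed
  qed
  then have "(\<Sum>k=1..t. ?f k) = ?f i"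
    using sum.remove[OF finite_atLeastAtMost i, of ?f] by simp
  then show ?thesis by (simp add: block_prod)
qed

lemma tri_one: "tri e t (mat 1)"
  using orth by (simp add: tri_def)

lemma tri_pow: "tri e t a \<Longrightarrow> tri e t (matpow a m)"
  by (induction m) (simp_all add: tri_one tri_mult)

lemma diag_pow:
  assumes a: "tri e t a" and i: "i \<in> {1..t}"
  shows "e i ** matpow a m ** e i = matpow (e i ** a ** e i) m ** e i"
proof (induction m)
  case 0 then show ?case using idem i by simp
next
  case (Suc m)
  have "e i ** matpow a (Suc m) ** e i = (e i ** a ** e i) ** (e i ** matpow a m ** e i)"
    using diag_mult[OF a tri_pow[OF a] i] by simp
  also have "\<dots> = matpow (e i ** a ** e i) (Suc m) ** e i"
    using Suc by (simp add: matrix_mul_assoc)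
  finally show ?case .
qed

lemma nilp:
  assumes a: "tri e t a" and z: "\<forall>i\<in>{1..t}. e i ** matpow a r ** e i = 0"
  shows "matpow a (r * t) = 0"
proof -
  define f where "f k = (\<Sum>i=k..t. e i)" for k
  have main: "\<forall>k. k + d = t + 1 \<longrightarrow> k \<ge> 1 \<longrightarrow> matpow a (r * d) ** f k = 0" for d
  proof (induction d)
    case 0 then show ?case by (simp add: f_def)
  next
    case (Suc d)
    show ?case
    proof (intro allI impI)
      fix k assume kd: "k + Suc d = t + 1" and k1: "k \<ge> 1"
      have kt: "k \<le> t" using kd by simp
      have fk: "f k = e k + f (Suc k)" using kt by (simp add: f_def sum.atLeast_Suc_atMost)
      have IH: "matpow a (r * d) ** f (Suc k) = 0" using Suc.IH kd by simp
      have pw1: "matpow a (r * Suc d) = matpow a r ** matpow a (r * d)"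
        using matpow_add[of a r "r * d"] by (simp add: mult_Suc_right)
      have pw2: "matpow a (r * Suc d) = matpow a (r * d) ** matpow a r"
        using matpow_add[of a "r * d" r] by (simp add: mult_Suc_right add.commute)
      have A: "matpow a (r * Suc d) ** f (Suc k) = 0"
        by (simp only: pw1 matrix_mul_assoc[symmetric] IH times0_right)
      let ?X = "matpow a r ** e k"
      have B: "?X = f (Suc k) ** ?X"
      proof -
        have "?X = (\<Sum>i=1..t. e i) ** ?X" by (simp only: sumI matrix_mul_lid)
        also have "\<dots> = (\<Sum>i=1..t. e i ** ?X)" by (rule matrix_sum_rdistrib)
        also have "\<dots> = (\<Sum>i=Suc k..t. e i ** ?X)"
        proof (rule sum.mono_neutral_right)
          show "{Suc k..t} \<subseteq> {1..t}" using k1 by auto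
          show "\<forall>i\<in>{1..t} - {Suc k..t}. e i ** ?X = 0"
          proof
            fix i assume i: "i \<in> {1..t} - {Suc k..t}"
            have ik: "e i ** ?X = e i ** matpow a r ** e k" by (rule matrix_mul_assoc)
            show "e i ** ?X = 0"
            proof (cases "i = k")
              case True then show ?thesis using z i ik by simp
            next
              case False then have "i < k" using i by auto
              moreover have "tri e t (matpow a r)" by (rule tri_pow[OF a])
              ultimately show ?thesis using i kt k1 ik unfolding tri_def by auto
            qed
          qed
        qed simp
        also have "\<dots> = f (Suc k) ** ?X" unfolding f_def by (rule matrix_sum_rdistrib[symmetric])
        finally show ?thesis .
      qed
      have "matpow a (r * Suc d) ** e k = matpow a (r * d) ** ?X"
        by (simp only: pw2 matrix_mul_assoc)
      also have "\<dots> = matpow a (r * d) ** (f (Suc k) ** ?X)" using B by simp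
      also have "\<dots> = 0" by (simp only: matrix_mul_assoc IH times0_left)
      finally have C: "matpow a (r * Suc d) ** e k = 0" .
      show "matpow a (r * Suc d) ** f k = 0" using A C fk by (simp add: matrix_add_ldistrib)
    qed
  qed
  have "f 1 = mat 1" unfolding f_def by (rule sumI)
  then show ?thesis using main[of t] by simp
qed

end


lemma msmult_mat: "msmult c x = mat c ** x"
  by (simp add: msmult_def vec_eq_iff mat_mult_comp)

lemma mpe_pCons0_sum:
  "mpe (pCons 0 g) B = (\<Sum>k\<le>degree g. mat (coeff g k) ** matpow B (Suc k))"
proof -
  have "mpe (pCons 0 g) B = B ** mpe g B" by (simp add: mpe_pCons)
  also have "\<dots> = (\<Sum>k\<le>degree g. mat (coeff g k) ** matpow B (Suc k))"
    by (simp add: mpe_def matrix_sum_ldistrib matrix_scalar_comm)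
  finally show ?thesis .
qed

theorem mainTheorem2:
  fixes e :: "nat \<Rightarrow> 'a::field^'n^'n" and \<sigma> :: "nat \<Rightarrow> 'a" and t :: nat
  assumes "t \<ge> 1"
    and "\<forall>i\<in>{1..t}. e i \<noteq> 0"
    and "\<forall>i\<in>{1..t}. e i ** e i = e i"
    and "\<forall>i\<in>{1..t}. \<forall>j\<in>{1..t}. i \<noteq> j \<longrightarrow> e i ** e j = 0"
    and "(\<Sum>i=1..t. e i) = mat 1"
    and "\<forall>k :: nat \<Rightarrow> nat. (\<forall>i\<in>{1..t}. k i \<le> rank (e i)) \<and> (\<exists>i\<in>{1..t}. k i \<noteq> 0)
           \<longrightarrow> (\<Sum>i=1..t. \<sigma> i * of_nat (k i)) \<noteq> 0"
  shows "mathieu_subspace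
           {a :: 'a^'n^'n. (\<forall>i\<in>{1..t}. \<forall>j\<in>{1..t}. i < j \<longrightarrow> e i ** a ** e j = 0)
              \<and> (\<Sum>i=1..t. \<sigma> i * trace (e i ** a ** e i)) = 0}"
proof -
  note idem = assms(3) and orth = assms(4) and sumI = assms(5) and hyp = assms(6)
  let ?V = "{a :: 'a^'n^'n. (\<forall>i\<in>{1..t}. \<forall>j\<in>{1..t}. i < j \<longrightarrow> e i ** a ** e j = 0)
              \<and> (\<Sum>i=1..t. \<sigma> i * trace (e i ** a ** e i)) = 0}"
  have zero: "0 \<in> ?V" by simp
  have sub: "F_subspace ?V"
    unfolding F_subspace_def
  proof (intro conjI ballI allI)
    show "0 \<in> ?V" by (rule zero)
  next
    fix x y assume x: "x \<in> ?V" and y: "y \<in> ?V"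
    have d: "e i ** (x + y) ** e j = e i ** x ** e j + e i ** y ** e j" for i j
      by (simp add: matrix_add_ldistrib matrix_add_rdistrib)
    show "x + y \<in> ?V"
      using x y by (simp add: d trace_add distrib_left sum.distrib)
  next
    fix c x assume x: "x \<in> ?V"
    have d: "e i ** (mat c ** x) ** e j = mat c ** (e i ** x ** e j)" for i j
      by (simp only: matrix_scalar_comm) (simp only: matrix_mul_assoc)
    have "(\<Sum>i=1..t. \<sigma> i * trace (e i ** (mat c ** x) ** e i)) = c * (\<Sum>i=1..t. \<sigma> i * trace (e i ** x ** e i))"
      by (simp add: d trace_mat_mult sum_distrib_left mult_ac)
    then show "msmult c x \<in> ?V"
      using x by (simp add: msmult_mat d)
  qed
  have mat: "\<exists>N. \<forall>m\<ge>N. b ** matpow a m ** c \<in> ?V" if H: "\<forall>m\<ge>1. matpow a m \<in> ?V" for a b c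
  proof -
    have tria: "tri e t a" using H[rule_format, of 1] by (simp add: tri_def)
    define B where "B i = e i ** a ** e i" for i
    have BSuc: "e i ** matpow a (Suc k) ** e i = matpow (B i) (Suc k)" if i: "i \<in> {1..t}" for i k
    proof -
      have "e i ** matpow a (Suc k) ** e i = matpow (B i) (Suc k) ** e i"
        unfolding B_def by (rule diag_pow[OF idem orth sumI tria i])
      also have "\<dots> = matpow (B i) k ** (B i ** e i)" by (simp only: matpow_Suc_right matrix_mul_assoc)
      also have "B i ** e i = B i" unfolding B_def using idem i by (simp add: idem_r[OF idem orth sumI i])
      finally show ?thesis by (simp only: matpow_Suc_right)
    qed
    have trB: "(\<Sum>i=1..t. \<sigma> i * trace (matpow (B i) (Suc k))) = 0" for k
    proof -
      have "(\<Sum>i=1..t. \<sigma> i * trace (e i ** matpow a (Suc k) ** e i)) = 0"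
        using H[rule_format, of "Suc k"] by simp
      moreover have "(\<Sum>i=1..t. \<sigma> i * trace (e i ** matpow a (Suc k) ** e i)) = (\<Sum>i=1..t. \<sigma> i * trace (matpow (B i) (Suc k)))"
      proof (rule sum.cong[OF refl])
        fix i assume "i \<in> {1..t}"
        then show "\<sigma> i * trace (e i ** matpow a (Suc k) ** e i) = \<sigma> i * trace (matpow (B i) (Suc k))"
          by (simp only: BSuc)
      qed
      ultimately show ?thesis by simp
    qed
    have "\<forall>i. \<exists>P. P \<noteq> 0 \<and> mpe P (B i) = 0" using annih by blast
    then obtain Pf where Pf: "\<forall>i. Pf i \<noteq> 0 \<and> mpe (Pf i) (B i) = 0" by metis
    define P where "P = (\<Prod>i\<in>{1..t}. Pf i)"
    have P0: "P \<noteq> 0" using Pf by (simp add: P_def)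
    have PB: "mpe P (B i) = 0" if i: "i \<in> {1..t}" for i
    proof -
      have eq: "P = Pf i * (\<Prod>j\<in>{1..t} - {i}. Pf j)"
        unfolding P_def by (rule prod.remove[OF finite_atLeastAtMost i])
      have "mpe P (B i) = mpe (Pf i) (B i) ** mpe (\<Prod>j\<in>{1..t} - {i}. Pf j) (B i)"
        by (simp only: eq mpe_mult)
      also have "mpe (Pf i) (B i) = 0" using Pf by blast
      finally show ?thesis by simp
    qed
    obtain r u v Q where r1: "r \<ge> 1" and rQ: "[:0,1:]^r * Q = [:0,1:] * P"
      and bz: "u * [:0,1:]^r + v * Q = 1"
      using bez[OF P0] by blast
    define g where "g = u * [:0,1:]^(r - 1)"
    have hg: "u * [:0,1:]^r = pCons 0 g"
    proof -
      obtain r' where "r = Suc r'" using r1 by (cases r) auto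
      then show ?thesis by (simp add: g_def mult_ac)
    qed
    define E where "E i = mpe (u * [:0,1:]^r) (B i)" for i
    have Eidem: "E i ** E i = E i" if "i \<in> {1..t}" for i
      unfolding E_def using fitting(1)[OF PB[OF that] rQ bz] .
    have Ezero: "matpow (B i) r = 0" if "i \<in> {1..t}" "E i = 0" for i
      using fitting(2)[OF PB[OF that(1)] rQ bz] that(2) unfolding E_def by blast
    have Etr: "(\<Sum>i=1..t. \<sigma> i * trace (E i)) = 0"
    proof -
      have "(\<Sum>i=1..t. \<sigma> i * trace (E i))
          = (\<Sum>i=1..t. \<sigma> i * (\<Sum>k\<le>degree g. coeff g k * trace (matpow (B i) (Suc k))))"
        by (simp add: E_def hg mpe_pCons0_sum trace_sum trace_mat_mult)
      also have "\<dots> = (\<Sum>k\<le>degree g. coeff g k * (\<Sum>i=1..t. \<sigma> i * trace (matpow (B i) (Suc k))))"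
        unfolding sum_distrib_left by (subst sum.swap) (simp add: mult_ac)
      also have "\<dots> = 0" using trB by simp
      finally show ?thesis .
    qed
    define kk where "kk i = rank (E i)" for i
    have kkle: "kk i \<le> rank (e i)" if "i \<in> {1..t}" for i
    proof -
      have "E i = B i ** mpe g (B i)" by (simp add: E_def hg mpe_pCons)
      also have "\<dots> = mpe g (B i) ** B i" using mpe_comm[of "[:0,1:]" "B i" g] by simp
      also have "\<dots> = (mpe g (B i) ** e i ** a) ** e i" by (simp add: B_def matrix_mul_assoc)
      finally show ?thesis unfolding kk_def using rank_mult_right_le by metis
    qed
    have "(\<Sum>i=1..t. \<sigma> i * of_nat (kk i)) = 0"
      using Etr by (simp add: kk_def trace_idem Eidem)
    then have "\<not> (\<exists>i\<in>{1..t}. kk i \<noteq> 0)" using hyp kkle by blast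
    then have zr: "\<forall>i\<in>{1..t}. e i ** matpow a r ** e i = 0"
    proof (intro ballI)
      fix i assume nz: "\<not> (\<exists>i\<in>{1..t}. kk i \<noteq> 0)" and i: "i \<in> {1..t}"
      have "rank (E i) = 0" using nz i by (auto simp: kk_def)
      then have "E i = 0" by (rule rank_eq_0_gen)
      then have "matpow (B i) r = 0" by (rule Ezero[OF i])
      then show "e i ** matpow a r ** e i = 0"
        using diag_pow[OF idem orth sumI tria i, of r] by (simp add: B_def)
    qed
    have nil: "matpow a (r * t) = 0" by (rule nilp[OF idem orth sumI tria zr])
    show ?thesis
    proof (intro exI allI impI)
      fix m assume "m \<ge> r * t"
      then have "matpow a m = matpow a (m - r * t) ** matpow a (r * t)"
        by (metis le_add_diff_inverse2 matpow_add)
      then have "matpow a m = 0" using nil by simp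
      then show "b ** matpow a m ** c \<in> ?V" using zero by simp
    qed
  qed
  show ?thesis unfolding mathieu_subspace_def using sub mat by blast
qed


end
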